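(* Let $d\ge1$ and $q\ge2$ even. Let $G$ be a function on $[0,\infty)$ such that $x^{d+q}G(x)\to0$ as $x\to\infty$ and $G^{(1)}$ is continuous almost everywhere. Then the following are equivalent: (i) $G\in\mathcal M_{d,0,q}$ and $G$ is differentiable; (ii) $G^{(1)}\in\mathcal M_{d,1,q+1}$.
   Context: $B_{d,i}(g)=\int_0^\infty x^{d-1+i}g(x)dx$, $b_d=2\pi^{d/2}/\Gamma(d/2)$. $\mathcal M_{d,0,q}$: functions $g$ on $[0,\infty)$ with $B_{d,0}(g)=b_d^{-1}$, $B_{d,i}(g)=0$ for $i=2,4,\ldots,q-2$, $B_{d,q}(g)\ne0$. $\mathcal M_{d,1,q+1}$: functions $g$ with $B_{d,1}(g)=-d\,b_d^{-1}$, $B_{d,i}(g)=0$ for $i=3,5,\ldots,q-1$, $B_{d,q+1}(g)\ne0$. *)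

theory Defs
  imports "HOL-Analysis.Analysis"
begin

text \<open>b_d = 2 pi^(d/2) / Gamma(d/2), the surface area of the unit sphere in R^d.\<close>
definition bconst :: "nat \<Rightarrow> real" where
  "bconst d = 2 * pi powr (real d / 2) / Gamma (real d / 2)"

definition Bfun :: "nat \<Rightarrow> nat \<Rightarrow> (real \<Rightarrow> real) \<Rightarrow> real \<Rightarrow> real" where
  "Bfun d i g = (\<lambda>x. x ^ (d - 1 + i) * g x)"

text \<open>B_{d,i}(g), as a (Henstock-Kurzweil, i.e. improper) integral over [0,infty).\<close>
definition Bmom :: "nat \<Rightarrow> nat \<Rightarrow> (real \<Rightarrow> real) \<Rightarrow> real" where
  "Bmom d i g = integral {0..} (Bfun d i g)"

definition M0 :: "nat \<Rightarrow> nat \<Rightarrow> (real \<Rightarrow> real) set" where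
  "M0 d q = {g.
     (\<forall>i. (i = 0 \<or> (even i \<and> 2 \<le> i \<and> i \<le> q)) \<longrightarrow> Bfun d i g integrable_on {0..}) \<and>
     Bmom d 0 g = 1 / bconst d \<and>
     (\<forall>i. even i \<and> 2 \<le> i \<and> i \<le> q - 2 \<longrightarrow> Bmom d i g = 0) \<and>
     Bmom d q g \<noteq> 0}"

definition M1 :: "nat \<Rightarrow> nat \<Rightarrow> (real \<Rightarrow> real) set" where
  "M1 d q = {g.
     (\<forall>i. (i = 1 \<or> (odd i \<and> 3 \<le> i \<and> i \<le> q + 1)) \<longrightarrow> Bfun d i g integrable_on {0..}) \<and>
     Bmom d 1 g = - real d / bconst d \<and>
     (\<forall>i. odd i \<and> 3 \<le> i \<and> i \<le> q - 1 \<longrightarrow> Bmom d i g = 0) \<and>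
     Bmom d (q + 1) g \<noteq> 0}"

end

theory Submission
  imports Defs
begin

lemma improper_iff:
  fixes f :: "real \<Rightarrow> real"
  assumes int: "\<And>b. f integrable_on {0..b}"
  shows "(f has_integral L) {0..} \<longleftrightarrow> ((\<lambda>b. integral {0..b} f) \<longlongrightarrow> L) at_top"
proof -
  have rint: "integral {a..b} (\<lambda>x. if x \<in> {0..} then f x else 0) = integral {0..b} f"
    if "a \<le> 0" for a b :: real
  proof -
    have e: "{0..} \<inter> {a..b} = {0..b}" using that by auto
    have "((\<lambda>x. if x \<in> {0..} then f x else 0) has_integral integral {0..b} f) {a..b}"
      unfolding has_integral_restrict_Int e using int by (simp add: integrable_integral)
    then show ?thesis by (rule integral_unique)
  qed
  have rinton: "(\<lambda>x. if x \<in> {0..} then f x else 0) integrable_on cbox a b" for a b :: real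
  proof -
    have "{0..} \<inter> {a..b} = {max 0 a..b}" by auto
    moreover have "f integrable_on {max 0 a..b}"
      by (rule integrable_on_subinterval[OF int[of b]]) auto
    ultimately show ?thesis unfolding integrable_on_def has_integral_restrict_Int[symmetric]
      by (metis box_real(2) has_integral_restrict_Int integrable_on_def)
  qed
  show ?thesis
  proof
    assume h: "(f has_integral L) {0..}"
    show "((\<lambda>b. integral {0..b} f) \<longlongrightarrow> L) at_top"
    proof (rule tendstoI)
      fix e :: real assume "e > 0"
      then obtain B where B: "B > 0" "\<And>a b. ball 0 B \<subseteq> cbox a b \<Longrightarrow>
          norm (integral (cbox a b) (\<lambda>x. if x \<in> {0..} then f x else 0) - L) < e"
        using h unfolding has_integral_alt' by blast
      show "\<forall>\<^sub>F b in at_top. dist (integral {0..b} f) L < e"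
        unfolding eventually_at_top_linorder
      proof (intro exI allI impI)
        fix b assume "b \<ge> B"
        then have "ball 0 B \<subseteq> cbox (-B) b"
          by (auto simp: ball_eq_greaterThanLessThan)
        from B(2)[OF this] rint[of "-B" b] B(1) show "dist (integral {0..b} f) L < e"
          by (simp add: dist_real_def)
      qed
    qed
  next
    assume lim: "((\<lambda>b. integral {0..b} f) \<longlongrightarrow> L) at_top"
    show "(f has_integral L) {0..}"
      unfolding has_integral_alt'
    proof (intro conjI allI impI rinton)
      fix e :: real assume "e > 0"
      then obtain B0 where B0: "\<And>b. b \<ge> B0 \<Longrightarrow> dist (integral {0..b} f) L < e"
        using lim unfolding tendsto_iff eventually_at_top_linorder by blast
      show "\<exists>B>0. \<forall>a b. ball 0 B \<subseteq> cbox a b \<longrightarrow>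
          norm (integral (cbox a b) (\<lambda>x. if x \<in> {0..} then f x else 0) - L) < e"
      proof (intro exI conjI allI impI)
        show "max B0 1 > 0" by simp
        fix a b :: real assume "ball 0 (max B0 1) \<subseteq> cbox a b"
        then have ab: "a \<le> - max B0 1" "max B0 1 \<le> b"
          by (auto simp: ball_eq_greaterThanLessThan greaterThanLessThan_subseteq_atLeastAtMost_iff)
        then show "norm (integral (cbox a b) (\<lambda>x. if x \<in> {0..} then f x else 0) - L) < e"
          using rint[of a b] B0[of b] by (simp add: dist_real_def)
      qed
    qed
  qed
qed


lemma ibp_finite:
  fixes G G1 :: "real \<Rightarrow> real" and n :: nat
  assumes deriv: "\<And>x. x \<ge> 0 \<Longrightarrow> (G has_real_derivative G1 x) (at x within {0..})"
    and n: "n \<ge> 1" and b: "b \<ge> 0"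
  shows "(\<lambda>x. x^(n-1) * G x) integrable_on {0..b}"
    and "((\<lambda>x. x^n * G1 x) has_integral (b^n * G b - real n * integral {0..b} (\<lambda>x. x^(n-1) * G x))) {0..b}"
proof -
  have cont: "continuous_on {0..b} G"
    unfolding continuous_on_eq_continuous_within
    using deriv by (meson DERIV_continuous DERIV_subset atLeastAtMost_iff atLeast_iff subsetI
        continuous_within_subset)
  show i1: "(\<lambda>x. x^(n-1) * G x) integrable_on {0..b}"
    by (intro integrable_continuous_real continuous_intros cont)
  have d: "((\<lambda>x. x^n * G x) has_vector_derivative (real n * x^(n-1) * G x + x^n * G1 x)) (at x within {0..b})"
    if "x \<in> {0..b}" for x :: real
  proof -
    have "(G has_real_derivative G1 x) (at x within {0..b})"
      using deriv[of x] that by (auto intro: DERIV_subset)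
    then have "((\<lambda>x. x^n * G x) has_real_derivative (real n * x^(n-1) * G x + x^n * G1 x)) (at x within {0..b})"
      by (auto intro!: derivative_eq_intros)
    then show ?thesis by (simp add: has_real_derivative_iff_has_vector_derivative)
  qed
  have "((\<lambda>x. real n * x^(n-1) * G x + x^n * G1 x) has_integral (b^n * G b - 0^n * G 0)) {0..b}"
    using fundamental_theorem_of_calculus[OF b d] by simp
  moreover have "((\<lambda>x. real n * (x^(n-1) * G x)) has_integral real n * integral {0..b} (\<lambda>x. x^(n-1) * G x)) {0..b}"
    using i1 by (intro has_integral_mult_right integrable_integral)
  ultimately have "((\<lambda>x. (real n * x^(n-1) * G x + x^n * G1 x) - real n * (x^(n-1) * G x)) has_integral
      (b^n * G b - 0^n * G 0) - real n * integral {0..b} (\<lambda>x. x^(n-1) * G x)) {0..b}"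
    by (rule has_integral_diff)
  then show "((\<lambda>x. x^n * G1 x) has_integral (b^n * G b - real n * integral {0..b} (\<lambda>x. x^(n-1) * G x))) {0..b}"
    using n by (simp add: power_0_left)
qed


lemma ibp_inf:
  fixes G G1 :: "real \<Rightarrow> real" and n :: nat
  assumes deriv: "\<And>x. x \<ge> 0 \<Longrightarrow> (G has_real_derivative G1 x) (at x within {0..})"
    and n: "n \<ge> 1" and lim0: "((\<lambda>x. x^n * G x) \<longlongrightarrow> 0) at_top"
  shows "(\<lambda>x. x^n * G1 x) integrable_on {0..} \<longleftrightarrow> (\<lambda>x. x^(n-1) * G x) integrable_on {0..}"
    and "(\<lambda>x. x^(n-1) * G x) integrable_on {0..} \<Longrightarrow>
         integral {0..} (\<lambda>x. x^n * G1 x) = - real n * integral {0..} (\<lambda>x. x^(n-1) * G x)"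
proof -
  define F where "F = (\<lambda>b. integral {0..b} (\<lambda>x. x^(n-1) * G x))"
  define H where "H = (\<lambda>b. integral {0..b} (\<lambda>x. x^n * G1 x))"
  have intF: "(\<lambda>x. x^(n-1) * G x) integrable_on {0..b}" for b
    by (cases "b \<ge> 0") (use ibp_finite(1)[OF deriv n] in auto)
  have intH: "(\<lambda>x. x^n * G1 x) integrable_on {0..b}" for b
    by (cases "b \<ge> 0") (use ibp_finite(2)[OF deriv n] in auto)
  have ev: "\<forall>\<^sub>F b in at_top. H b = b^n * G b - real n * F b"
    unfolding eventually_at_top_linorder H_def F_def
    by (intro exI[of _ 0] allI impI integral_unique ibp_finite(2)[OF deriv n]) auto
  have ev2: "\<forall>\<^sub>F b in at_top. F b = (b^n * G b - H b) / real n"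
    using ev by eventually_elim (use n in auto)
  have dirH: "((\<lambda>x. x^n * G1 x) has_integral (- real n * L)) {0..}"
    if "((\<lambda>x. x^(n-1) * G x) has_integral L) {0..}" for L
  proof -
    have "(F \<longlongrightarrow> L) at_top" using that improper_iff[OF intF] F_def by simp
    then have "((\<lambda>b. b^n * G b - real n * F b) \<longlongrightarrow> 0 - real n * L) at_top"
      by (intro tendsto_intros lim0)
    then have "(H \<longlongrightarrow> - real n * L) at_top"
      using ev by (simp add: tendsto_cong)
    then show ?thesis using improper_iff[OF intH] H_def by simp
  qed
  have dirF: "((\<lambda>x. x^(n-1) * G x) has_integral (- L / real n)) {0..}"
    if "((\<lambda>x. x^n * G1 x) has_integral L) {0..}" for L
  proof -
    have "(H \<longlongrightarrow> L) at_top" using that improper_iff[OF intH] H_def by simp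
    then have "((\<lambda>b. (b^n * G b - H b) / real n) \<longlongrightarrow> (0 - L) / real n) at_top"
      using n by (intro tendsto_intros lim0) auto
    then have "(F \<longlongrightarrow> - L / real n) at_top"
      using ev2 by (simp add: tendsto_cong)
    then show ?thesis using improper_iff[OF intF] F_def by simp
  qed
  show "(\<lambda>x. x^n * G1 x) integrable_on {0..} \<longleftrightarrow> (\<lambda>x. x^(n-1) * G x) integrable_on {0..}"
    using dirH dirF unfolding integrable_on_def by blast
  show "integral {0..} (\<lambda>x. x^n * G1 x) = - real n * integral {0..} (\<lambda>x. x^(n-1) * G x)"
    if "(\<lambda>x. x^(n-1) * G x) integrable_on {0..}"
    using dirH[OF integrable_integral[OF that]] by (rule integral_unique)
qed


lemma keyB:
  fixes G G1 :: "real \<Rightarrow> real"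
  assumes d: "d \<ge> 1" and iq: "i \<le> q"
    and deriv: "\<And>x. x \<ge> 0 \<Longrightarrow> (G has_real_derivative G1 x) (at x within {0..})"
    and decay: "((\<lambda>x. x ^ (d + q) * G x) \<longlongrightarrow> 0) at_top"
  shows "Bfun d (Suc i) G1 integrable_on {0..} \<longleftrightarrow> Bfun d i G integrable_on {0..}"
    and "Bfun d i G integrable_on {0..} \<Longrightarrow> Bmom d (Suc i) G1 = - (real d + real i) * Bmom d i G"
proof -
  have lim0: "((\<lambda>x. x^(d+i) * G x) \<longlongrightarrow> 0) at_top"
  proof (rule Lim_null_comparison)
    show "((\<lambda>x. \<bar>x ^ (d + q) * G x\<bar>) \<longlongrightarrow> 0) at_top"
      using tendsto_rabs_zero[OF decay] .
    show "\<forall>\<^sub>F x in at_top. norm (x^(d+i) * G x) \<le> \<bar>x ^ (d + q) * G x\<bar>"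
      unfolding eventually_at_top_linorder
    proof (intro exI[of _ 1] allI impI)
      fix x :: real assume "x \<ge> 1"
      then have "x^(d+i) \<le> x^(d+q)" using iq by (intro power_increasing) auto
      then show "norm (x^(d+i) * G x) \<le> \<bar>x ^ (d + q) * G x\<bar>"
        using \<open>x \<ge> 1\<close> by (simp add: abs_mult mult_right_mono)
    qed
  qed
  have n: "d + i \<ge> 1" using d by simp
  have e1: "Bfun d (Suc i) G1 = (\<lambda>x. x^(d+i) * G1 x)"
    using d unfolding Bfun_def by (auto simp: fun_eq_iff)
  have e2: "Bfun d i G = (\<lambda>x. x^(d+i-1) * G x)"
    using d unfolding Bfun_def by (auto simp: fun_eq_iff)
  show "Bfun d (Suc i) G1 integrable_on {0..} \<longleftrightarrow> Bfun d i G integrable_on {0..}"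
    unfolding e1 e2 by (rule ibp_inf(1)[OF deriv n lim0])
  show "Bmom d (Suc i) G1 = - (real d + real i) * Bmom d i G" if "Bfun d i G integrable_on {0..}"
    using ibp_inf(2)[OF deriv n lim0] that unfolding Bmom_def e1 e2 by simp
qed

theorem lemmaB7:
  fixes d q :: nat and G G1 :: "real \<Rightarrow> real"
  assumes "d \<ge> 1" and "q \<ge> 2" and "even q"
    and deriv: "\<And>x. x \<ge> 0 \<Longrightarrow> (G has_real_derivative G1 x) (at x within {0..})"
    and decay: "((\<lambda>x. x ^ (d + q) * G x) \<longlongrightarrow> 0) at_top"
    and cont_ae: "AE x in lborel. x \<ge> 0 \<longrightarrow> isCont G1 x"
  shows "(G \<in> M0 d q \<and> (\<forall>x\<ge>0. G differentiable (at x within {0..})))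
           \<longleftrightarrow> G1 \<in> M1 d q"
proof -
  note K1 = keyB(1)[OF assms(1) _ deriv decay]
  note K2 = keyB(2)[OF assms(1) _ deriv decay]
  have diff: "\<forall>x\<ge>0. G differentiable (at x within {0..})"
    using deriv real_differentiable_def by blast
  have bpos: "bconst d \<noteq> 0"
    unfolding bconst_def using \<open>d \<ge> 1\<close> by (auto intro!: Gamma_real_pos simp: Gamma_real_pos less_imp_neq[symmetric])
  have "G \<in> M0 d q \<longleftrightarrow> G1 \<in> M1 d q"
  proof
    assume M: "G \<in> M0 d q"
    then have I: "\<And>i. i = 0 \<or> (even i \<and> 2 \<le> i \<and> i \<le> q) \<Longrightarrow> Bfun d i G integrable_on {0..}"
      and B0: "Bmom d 0 G = 1 / bconst d"
      and Bz: "\<And>i. even i \<and> 2 \<le> i \<and> i \<le> q - 2 \<Longrightarrow> Bmom d i G = 0"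
      and Bq: "Bmom d q G \<noteq> 0" unfolding M0_def by auto
    show "G1 \<in> M1 d q" unfolding M1_def mem_Collect_eq
    proof (intro conjI allI impI)
      fix i :: nat assume h: "i = 1 \<or> odd i \<and> 3 \<le> i \<and> i \<le> q + 1"
      then obtain j where j: "i = Suc j" by (cases i) auto
      with h have "j = 0 \<or> (even j \<and> 2 \<le> j \<and> j \<le> q)" by auto
      with j show "Bfun d i G1 integrable_on {0..}" using K1 I \<open>q \<ge> 2\<close> by auto
    next
      show "Bmom d 1 G1 = - real d / bconst d"
        using K2[of 0] I[of 0] B0 by simp
    next
      fix i :: nat assume h: "odd i \<and> 3 \<le> i \<and> i \<le> q - 1"
      then obtain j where j: "i = Suc j" by (cases i) auto
      with h have "even j \<and> 2 \<le> j \<and> j \<le> q - 2" by auto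
      note j this
      then show "Bmom d i G1 = 0" using j K2[of j] I[of j] Bz[of j] by auto
    next
      show "Bmom d (q + 1) G1 \<noteq> 0"
        using K2[of q] I[of q] Bq \<open>even q\<close> \<open>q \<ge> 2\<close> \<open>d \<ge> 1\<close> by simp
    qed
  next
    assume M: "G1 \<in> M1 d q"
    then have I: "\<And>i. i = 1 \<or> (odd i \<and> 3 \<le> i \<and> i \<le> q + 1) \<Longrightarrow> Bfun d i G1 integrable_on {0..}"
      and B1: "Bmom d 1 G1 = - real d / bconst d"
      and Bz: "\<And>i. odd i \<and> 3 \<le> i \<and> i \<le> q - 1 \<Longrightarrow> Bmom d i G1 = 0"
      and Bq: "Bmom d (q + 1) G1 \<noteq> 0" unfolding M1_def by auto
    have IG: "Bfun d j G integrable_on {0..}" if "j = 0 \<or> (even j \<and> 2 \<le> j \<and> j \<le> q)" for j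
      using K1[of j] I[of "Suc j"] that by auto
    show "G \<in> M0 d q" unfolding M0_def mem_Collect_eq
    proof (intro conjI allI impI IG)
      show "Bmom d 0 G = 1 / bconst d"
        using K2[of 0] IG[of 0] B1 \<open>d \<ge> 1\<close> bpos by (auto simp: field_simps)
    next
      fix j :: nat assume h: "even j \<and> 2 \<le> j \<and> j \<le> q - 2"
      then show "Bmom d j G = 0" using K2[of j] IG[of j] Bz[of "Suc j"] \<open>d \<ge> 1\<close> by auto
    next
      show "Bmom d q G \<noteq> 0"
        using K2[of q] IG[of q] Bq \<open>even q\<close> \<open>q \<ge> 2\<close> by auto
    qed
  qed
  then show ?thesis using diff by blast
qed

end
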